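(* Let $A=(Q,\Sigma,\delta,q_0,F)$ be a minimal poNFA (i.e., no poNFA with fewer states accepts $L(A)$). Then $L({}_{q_1}A)\neq L({}_{q_2}A)$ for all distinct states $q_1,q_2\in Q$, where ${}_qA=(Q,\Sigma,\delta,q,F)$.
   Context: NFAs have a single initial state and no $\varepsilon$-transitions. For an NFA with transition function $\delta$, write $p\leq q$ if $q\in\delta(p,w)$ for some word $w$; the NFA is a poNFA (partially ordered NFA) if $\leq$ is a partial order on its states. *)

theory Defs
  imports Main
begin

record ('s, 'a) nfa =
  states   :: "'s set"
  alphabet :: "'a set"
  trans    :: "'s \<Rightarrow> 'a \<Rightarrow> 's set"
  init     :: 's
  final    :: "'s set"

definition wf_nfa :: "('s, 'a) nfa \<Rightarrow> bool" where
  "wf_nfa A \<longleftrightarrow> finite (states A) \<and> finite (alphabet A) \<and> init A \<in> states A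
     \<and> final A \<subseteq> states A
     \<and> (\<forall>q\<in>states A. \<forall>a\<in>alphabet A. trans A q a \<subseteq> states A)"

fun delta_star :: "('s, 'a) nfa \<Rightarrow> 's \<Rightarrow> 'a list \<Rightarrow> 's set" where
  "delta_star A p [] = {p}"
| "delta_star A p (a # w) = (\<Union>q\<in>trans A p a. delta_star A q w)"

definition lang :: "('s, 'a) nfa \<Rightarrow> 'a list set" where
  "lang A = {w. set w \<subseteq> alphabet A \<and> delta_star A (init A) w \<inter> final A \<noteq> {}}"

definition reach :: "('s, 'a) nfa \<Rightarrow> 's \<Rightarrow> 's \<Rightarrow> bool" where
  "reach A p q \<longleftrightarrow> (\<exists>w. set w \<subseteq> alphabet A \<and> q \<in> delta_star A p w)"

definition poNFA :: "('s, 'a) nfa \<Rightarrow> bool" where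
  "poNFA A \<longleftrightarrow> wf_nfa A \<and> partial_order_on (states A) {(p, q). p \<in> states A \<and> q \<in> states A \<and> reach A p q}"

definition minimal_poNFA :: "('s, 'a) nfa \<Rightarrow> bool" where
  "minimal_poNFA A \<longleftrightarrow> poNFA A \<and>
     (\<forall>B :: ('s, 'a) nfa. poNFA B \<and> alphabet B = alphabet A \<and> lang B = lang A
        \<longrightarrow> card (states A) \<le> card (states B))"

end

theory Submission
  imports Defs
begin

lemma delta_star_append:
  "delta_star A p (u @ v) = (\<Union>q\<in>delta_star A p u. delta_star A q v)"
  by (induction u arbitrary: p) auto

lemma reach_trans:
  assumes "reach A p q" "reach A q r" shows "reach A p r"
proof -
  obtain u where u: "set u \<subseteq> alphabet A" "q \<in> delta_star A p u" using assms(1) reach_def by fast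
  obtain v where v: "set v \<subseteq> alphabet A" "r \<in> delta_star A q v" using assms(2) reach_def by fast
  have "r \<in> delta_star A p (u @ v)" using u v by (auto simp: delta_star_append)
  then show ?thesis using u v unfolding reach_def by (intro exI[of _ "u@v"]) auto
qed

lemma reach_refl: "reach A p p"
  unfolding reach_def by (intro exI[of _ "[]"]) auto

lemma reach_step: "a \<in> alphabet A \<Longrightarrow> r \<in> trans A p a \<Longrightarrow> reach A p r"
  unfolding reach_def by (intro exI[of _ "[a]"]) auto

lemma reach_Cons: "a \<in> alphabet A \<Longrightarrow> r \<in> trans A p a \<Longrightarrow> reach A r q \<Longrightarrow> reach A p q"
  using reach_step reach_trans by metis

lemma delta_star_init[simp]: "delta_star (A\<lparr>init := q\<rparr>) = delta_star A"
proof (intro ext)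
  fix p w show "delta_star (A\<lparr>init := q\<rparr>) p w = delta_star A p w"
    by (induction w arbitrary: p) auto
qed

lemma lang_init: "lang (A\<lparr>init := q\<rparr>) = {w. set w \<subseteq> alphabet A \<and> delta_star A q w \<inter> final A \<noteq> {}}"
  unfolding lang_def by simp

lemma reach_states:
  assumes "wf_nfa A" "p \<in> states A" "set w \<subseteq> alphabet A" "q \<in> delta_star A p w"
  shows "q \<in> states A"
  using assms(2-4)
proof (induction w arbitrary: p)
  case Nil then show ?case by simp
next
  case (Cons a w)
  then obtain r where r: "r \<in> trans A p a" "q \<in> delta_star A r w" by auto
  have "a \<in> alphabet A" using Cons.prems by simp
  then have "r \<in> states A" using assms(1) Cons.prems(1) r(1) unfolding wf_nfa_def by blast
  then show ?case using Cons r by auto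
qed

lemma reach_statesD: "wf_nfa A \<Longrightarrow> p \<in> states A \<Longrightarrow> reach A p q \<Longrightarrow> q \<in> states A"
  unfolding reach_def using reach_states by fast

definition merge :: "('s, 'a) nfa \<Rightarrow> 's \<Rightarrow> 's \<Rightarrow> ('s, 'a) nfa" where
  "merge A q1 q2 = \<lparr>states = states A - {q1}, alphabet = alphabet A,
     trans = (\<lambda>q a. (trans A q a - {q1}) \<union> (if q1 \<in> trans A q a then {q2} else {})),
     init = (if init A = q1 then q2 else init A), final = final A - {q1}\<rparr>"

lemma core:
  fixes A :: "('s, 'a) nfa"
  assumes min: "minimal_poNFA A"
    and q1: "q1 \<in> states A" and q2: "q2 \<in> states A" and ne: "q1 \<noteq> q2"
    and nr: "\<not> reach A q2 q1"
    and eq: "lang (A\<lparr>init := q1\<rparr>) = lang (A\<lparr>init := q2\<rparr>)"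
  shows False
proof -
  define B where "B = merge A q1 q2"
  have po: "poNFA A" using min minimal_poNFA_def by blast
  have wf: "wf_nfa A" using po poNFA_def by blast
  have anti: "\<And>p r. p \<in> states A \<Longrightarrow> r \<in> states A \<Longrightarrow> reach A p r \<Longrightarrow> reach A r p \<Longrightarrow> p = r"
  proof -
    fix p r assume "p \<in> states A" "r \<in> states A" "reach A p r" "reach A r p"
    moreover have "antisym {(p, q). p \<in> states A \<and> q \<in> states A \<and> reach A p q}"
      using po unfolding poNFA_def partial_order_on_def by blast
    ultimately show "p = r" unfolding antisym_def by blast
  qed
  have eqw: "\<And>w. set w \<subseteq> alphabet A \<Longrightarrow>
      (delta_star A q1 w \<inter> final A \<noteq> {}) = (delta_star A q2 w \<inter> final A \<noteq> {})"
    using eq unfolding lang_init by blast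
  have tB: "\<And>q a. trans B q a = (trans A q a - {q1}) \<union> (if q1 \<in> trans A q a then {q2} else {})"
    and sB: "states B = states A - {q1}" and aB: "alphabet B = alphabet A"
    and fB: "final B = final A - {q1}" and iB: "init B = (if init A = q1 then q2 else init A)"
    unfolding B_def merge_def by auto
  have acc: "\<And>w q. q \<in> states A \<Longrightarrow> q \<noteq> q1 \<Longrightarrow> set w \<subseteq> alphabet A \<Longrightarrow>
      (delta_star B q w \<inter> final B \<noteq> {}) = (delta_star A q w \<inter> final A \<noteq> {})"
  proof -
    fix w q
    show "q \<in> states A \<Longrightarrow> q \<noteq> q1 \<Longrightarrow> set w \<subseteq> alphabet A \<Longrightarrow>
      (delta_star B q w \<inter> final B \<noteq> {}) = (delta_star A q w \<inter> final A \<noteq> {})"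
    proof (induction w arbitrary: q)
      case Nil then show ?case by (auto simp: fB)
    next
      case (Cons a w)
      have a: "a \<in> alphabet A" and w: "set w \<subseteq> alphabet A" using Cons.prems by auto
      have sub: "trans A q a \<subseteq> states A" using wf Cons.prems a unfolding wf_nfa_def by blast
      have IH: "\<And>r. r \<in> trans A q a \<Longrightarrow> r \<noteq> q1 \<Longrightarrow>
          (delta_star B r w \<inter> final B \<noteq> {}) = (delta_star A r w \<inter> final A \<noteq> {})"
        using Cons.IH sub w by blast
      have IH2: "(delta_star B q2 w \<inter> final B \<noteq> {}) = (delta_star A q1 w \<inter> final A \<noteq> {})"
        using Cons.IH[OF q2 ne[symmetric] w] eqw[OF w] by simp
      have LA: "(delta_star A q (a#w) \<inter> final A \<noteq> {}) = (\<exists>r\<in>trans A q a. delta_star A r w \<inter> final A \<noteq> {})"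
        by auto
      have LB: "(delta_star B q (a#w) \<inter> final B \<noteq> {}) = (\<exists>r\<in>trans B q a. delta_star B r w \<inter> final B \<noteq> {})"
        by auto
      show ?case
      proof (cases "q1 \<in> trans A q a")
        case True
        then have tBq: "trans B q a = (trans A q a - {q1}) \<union> {q2}" using tB by simp
        have "(\<exists>r\<in>trans B q a. delta_star B r w \<inter> final B \<noteq> {}) = (\<exists>r\<in>trans A q a. delta_star A r w \<inter> final A \<noteq> {})"
        proof
          assume "\<exists>r\<in>trans B q a. delta_star B r w \<inter> final B \<noteq> {}"
          then obtain r where r: "r \<in> trans B q a" "delta_star B r w \<inter> final B \<noteq> {}" by (rule bexE)
          show "\<exists>r\<in>trans A q a. delta_star A r w \<inter> final A \<noteq> {}"
          proof (cases "r = q2")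
            case True then show ?thesis using r(2) IH2 \<open>q1 \<in> trans A q a\<close> by auto
          next
            case False then have "r \<in> trans A q a" "r \<noteq> q1" using r(1) tBq by auto
            then show ?thesis using IH[of r] r(2) by auto
          qed
        next
          assume "\<exists>r\<in>trans A q a. delta_star A r w \<inter> final A \<noteq> {}"
          then obtain r where r: "r \<in> trans A q a" "delta_star A r w \<inter> final A \<noteq> {}" by (rule bexE)
          show "\<exists>r\<in>trans B q a. delta_star B r w \<inter> final B \<noteq> {}"
          proof (cases "r = q1")
            case True
            have "q2 \<in> trans B q a" using tBq by simp
            then show ?thesis using r(2) IH2 True by auto
          next
            case False then have "r \<in> trans B q a" using r(1) tBq by auto
            then show ?thesis using IH[OF r(1) False] r(2) by auto
          qed
        qed
        then show ?thesis unfolding LA LB .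
      next
        case False
        then have "trans B q a = trans A q a" using tB by simp
        have "\<And>r. r \<in> trans A q a \<Longrightarrow> r \<noteq> q1" using False by auto
        then show ?thesis unfolding LA LB \<open>trans B q a = trans A q a\<close> using IH by simp
      qed
    qed
  qed
  have langB: "lang B = lang A"
  proof -
    have i: "init A \<in> states A" using wf wf_nfa_def by blast
    have "\<And>w. set w \<subseteq> alphabet A \<Longrightarrow>
       (delta_star B (init B) w \<inter> final B \<noteq> {}) = (delta_star A (init A) w \<inter> final A \<noteq> {})"
    proof -
      fix w assume w: "set w \<subseteq> alphabet A"
      show "(delta_star B (init B) w \<inter> final B \<noteq> {}) = (delta_star A (init A) w \<inter> final A \<noteq> {})"
      proof (cases "init A = q1")
        case True then show ?thesis using acc[OF q2 ne[symmetric] w] eqw[OF w] iB by simp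
      next
        case False then show ?thesis using acc[OF i False w] iB by simp
      qed
    qed
    then show ?thesis unfolding lang_def aB by blast
  qed
  define R where "R = (\<lambda>p r. reach A p r \<or> (reach A p q1 \<and> reach A q2 r))"
  have RB: "\<And>w p r. set w \<subseteq> alphabet A \<Longrightarrow> r \<in> delta_star B p w \<Longrightarrow> R p r"
  proof -
    fix w
    show "\<And>p r. set w \<subseteq> alphabet A \<Longrightarrow> r \<in> delta_star B p w \<Longrightarrow> R p r"
    proof (induction w)
      case Nil then show ?case by (simp add: R_def reach_refl)
    next
      case (Cons a w)
      then obtain s where s: "s \<in> trans B p a" "r \<in> delta_star B s w" and a: "a \<in> alphabet A"
        by auto
      have Rs: "R s r" using Cons s by auto
      show ?case
      proof (cases "s \<in> trans A p a - {q1}")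
        case True
        then have st: "s \<in> trans A p a" by simp
        show ?thesis
        proof (cases "reach A s r")
          case True then show ?thesis using reach_Cons[OF a st] unfolding R_def by simp
        next
          case False then have "reach A s q1" "reach A q2 r" using Rs unfolding R_def by auto
          then show ?thesis using reach_Cons[OF a st] unfolding R_def by simp
        qed
      next
        case False
        then have "s = q2" "q1 \<in> trans A p a" using s(1) tB by (auto split: if_splits)
        then have "reach A q2 r" using Rs nr unfolding R_def by blast
        moreover have "reach A p q1" using reach_step[OF a] \<open>q1 \<in> trans A p a\<close> .
        ultimately show ?thesis unfolding R_def by blast
      qed
    qed
  qed
  have reachB: "\<And>p r. reach B p r \<Longrightarrow> R p r"
  proof -
    fix p r assume "reach B p r"
    then obtain w where "set w \<subseteq> alphabet B" "r \<in> delta_star B p w" unfolding reach_def by blast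
    then show "R p r" using RB aB by simp
  qed
  have wfB: "wf_nfa B"
  proof -
    have "finite (states B)" using wf sB wf_nfa_def by auto
    moreover have "finite (alphabet B)" using wf aB wf_nfa_def by auto
    moreover have "init B \<in> states B" using wf sB iB q2 ne unfolding wf_nfa_def by auto
    moreover have "final B \<subseteq> states B" using wf sB fB unfolding wf_nfa_def by auto
    moreover have "\<forall>q\<in>states B. \<forall>a\<in>alphabet B. trans B q a \<subseteq> states B"
    proof (intro ballI)
      fix q a assume "q \<in> states B" "a \<in> alphabet B"
      then have "trans A q a \<subseteq> states A" using wf sB aB unfolding wf_nfa_def by blast
      then show "trans B q a \<subseteq> states B" using tB[of q a] sB q2 ne by auto
    qed
    ultimately show ?thesis unfolding wf_nfa_def by blast
  qed
  have poB: "poNFA B"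
  proof -
    let ?r = "{(p, q). p \<in> states B \<and> q \<in> states B \<and> reach B p q}"
    have "?r \<subseteq> states B \<times> states B" by auto
    moreover have "refl_on (states B) ?r" unfolding refl_on_def using reach_refl by fast
    moreover have "Relation.trans ?r" unfolding Relation.trans_def using reach_trans by fast
    moreover have "antisym ?r"
    proof (rule antisymI)
      fix p r assume "(p, r) \<in> ?r" "(r, p) \<in> ?r"
      then have pr: "p \<in> states A" "r \<in> states A" "R p r" "R r p" using reachB sB by auto
      show "p = r"
      proof (cases "reach A p r")
        case True
        show ?thesis
        proof (cases "reach A r p")
          case True2: True
          show ?thesis using anti[OF pr(1,2) True True2] .
        next
          case False
          then have "reach A r q1" "reach A q2 p" using pr(4) unfolding R_def by auto
          then have "reach A q2 q1" using True reach_trans by metis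
          then show ?thesis using nr by simp
        qed
      next
        case False
        then have h: "reach A p q1" "reach A q2 r" using pr(3) unfolding R_def by auto
        have "reach A r q1"
        proof (cases "reach A r p")
          case True then show ?thesis using h(1) by (rule reach_trans)
        next
          case False then show ?thesis using pr(4) unfolding R_def by simp
        qed
        with h(2) have "reach A q2 q1" by (rule reach_trans)
        then show ?thesis using nr by simp
      qed
    qed
    ultimately show ?thesis unfolding poNFA_def partial_order_on_def preorder_on_def
      using wfB by blast
  qed
  have "card (states A) \<le> card (states B)"
    using min poB aB langB unfolding minimal_poNFA_def by blast
  moreover have "card (states B) < card (states A)"
  proof -
    have fin: "finite (states A)" using wf wf_nfa_def by blast
    then have "card (states A) > 0" using q1 card_gt_0_iff by blast
    then show ?thesis using sB q1 fin by (simp add: card_Diff_singleton)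
  qed
  ultimately show False by simp
qed

theorem lemma12:
  fixes A :: "('s, 'a) nfa"
  assumes "minimal_poNFA A"
    and "q1 \<in> states A" and "q2 \<in> states A" and "q1 \<noteq> q2"
  shows "lang (A\<lparr>init := q1\<rparr>) \<noteq> lang (A\<lparr>init := q2\<rparr>)"
proof
  assume eq: "lang (A\<lparr>init := q1\<rparr>) = lang (A\<lparr>init := q2\<rparr>)"
  have "antisym {(p, q). p \<in> states A \<and> q \<in> states A \<and> reach A p q}"
    using assms(1) unfolding minimal_poNFA_def poNFA_def partial_order_on_def by blast
  then have "\<not> reach A q2 q1 \<or> \<not> reach A q1 q2"
    using assms(2-4) unfolding antisym_def by blast
  then show False
  proof
    assume "\<not> reach A q2 q1" then show False using core[OF assms(1-4)] eq by blast
  next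
    assume "\<not> reach A q1 q2" then show False using core[OF assms(1) assms(3) assms(2) assms(4)[symmetric]] eq[symmetric] by blast
  qed
qed

end
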